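(* Let $G$ be a first-countable Hausdorff compact topological monoid with neutral element $e$, and let $f:G\to G$ be a closed mapping such that for each $x,y\in G$ and each neighbourhood $V$ of $e$ there exist $z\in G$ and $n\in\mathbb{N}$ with $f^n(x),f^n(y)\in zV$. Then $f$ has a unique fixed point.
   Context: A topological monoid is a semigroup with neutral element, equipped with a topology making multiplication jointly continuous. A mapping is closed if it maps closed sets to closed sets (continuity is not assumed). $zV=\{zv:v\in V\}$; $f^n$ is the $n$-fold iterate of $f$. *)

theory Defs
  imports "HOL-Analysis.Analysis"
begin

definition closed_map_on_type :: "('a::topological_space \<Rightarrow> 'b::topological_space) \<Rightarrow> bool" where
  "closed_map_on_type f \<longleftrightarrow> (\<forall>S. closed S \<longrightarrow> closed (f ` S))"

definition nhd_of :: "'a::topological_space set \<Rightarrow> 'a \<Rightarrow> bool" where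
  "nhd_of V e \<longleftrightarrow> (\<exists>U. open U \<and> e \<in> U \<and> U \<subseteq> V)"

end

theory Submission
  imports Defs
begin

lemma seq_closed:
  fixes s :: "nat \<Rightarrow> 'a::t2_space"
  assumes "s \<longlonglongrightarrow> l" shows "closed (insert l (range s))"
proof -
  have "compactin euclidean (insert l (range s))"
    by (rule compactin_sequence_with_limit) (use assms in auto)
  then show ?thesis using compact_imp_closed by simp
qed

lemma basis_lim:
  fixes A :: "nat \<Rightarrow> 'a::topological_space set"
  assumes A: "\<And>S. open S \<Longrightarrow> x \<in> S \<Longrightarrow> eventually (\<lambda>i. A i \<subseteq> S) sequentially"
    and v: "\<And>i. v i \<in> A i"
  shows "v \<longlonglongrightarrow> x"
proof (rule topological_tendstoI)
  fix S assume "open S" "x \<in> S"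
  from A[OF this] show "eventually (\<lambda>i. v i \<in> S) sequentially"
    by (rule eventually_mono) (use v in auto)
qed

lemma limit_lemma:
  fixes zz vv ww :: "nat \<Rightarrow> 'a::{monoid_mult, t2_space, first_countable_topology}"
  assumes cpt: "compact (UNIV :: 'a set)"
    and mult_cont: "continuous_on UNIV (\<lambda>p :: 'a \<times> 'a. fst p * snd p)"
    and A: "\<And>S. open S \<Longrightarrow> 1 \<in> S \<Longrightarrow> eventually (\<lambda>i. A i \<subseteq> S) sequentially"
    and v: "\<And>i. vv i \<in> A i" and w: "\<And>i. ww i \<in> A i"
  shows "\<exists>r c. strict_mono r \<and> (\<lambda>k. zz (r k) * vv (r k)) \<longlonglongrightarrow> c
            \<and> (\<lambda>k. zz (r k) * ww (r k)) \<longlonglongrightarrow> c"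
proof -
  have "seq_compact (UNIV :: 'a set)" using cpt compact_imp_seq_compact by blast
  then obtain c r where r: "strict_mono r" and zc: "(zz \<circ> r) \<longlonglongrightarrow> c"
    unfolding seq_compact_def by blast
  have v1: "(vv \<circ> r) \<longlonglongrightarrow> 1"
    using LIMSEQ_subseq_LIMSEQ[OF basis_lim[OF A v] r] .
  have w1: "(ww \<circ> r) \<longlonglongrightarrow> 1"
    using LIMSEQ_subseq_LIMSEQ[OF basis_lim[OF A w] r] .
  have "(\<lambda>k. fst ((zz (r k), vv (r k))) * snd ((zz (r k), vv (r k)))) \<longlonglongrightarrow> fst (c, 1::'a) * snd (c, 1::'a)"
    by (rule continuous_on_tendsto_compose[OF mult_cont, where g="\<lambda>k. (zz (r k), vv (r k))"])
       (use zc v1 in \<open>auto intro!: tendsto_Pair simp: o_def\<close>)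
  moreover have "(\<lambda>k. fst ((zz (r k), ww (r k))) * snd ((zz (r k), ww (r k)))) \<longlonglongrightarrow> fst (c, 1::'a) * snd (c, 1::'a)"
    by (rule continuous_on_tendsto_compose[OF mult_cont, where g="\<lambda>k. (zz (r k), ww (r k))"])
       (use zc w1 in \<open>auto intro!: tendsto_Pair simp: o_def\<close>)
  ultimately show ?thesis using r by auto
qed


lemma clos_step:
  fixes f :: "'a::t2_space \<Rightarrow> 'a"
  assumes cf: "closed_map_on_type f" and s: "s \<longlonglongrightarrow> c" and fs: "(\<lambda>k. f (s k)) \<longlonglongrightarrow> c"
  shows "f c = c \<or> (\<exists>k\<ge>M. f (s k) = c)"
proof -
  define s' where "s' = (\<lambda>k. s (k + M))"
  have s': "s' \<longlonglongrightarrow> c" unfolding s'_def using LIMSEQ_ignore_initial_segment[OF s] .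
  have fs': "(\<lambda>k. f (s' k)) \<longlonglongrightarrow> c" unfolding s'_def
    using LIMSEQ_ignore_initial_segment[OF fs, of M] .
  have "closed (f ` insert c (range s'))"
    using cf seq_closed[OF s'] unfolding closed_map_on_type_def by blast
  moreover have "eventually (\<lambda>k. f (s' k) \<in> f ` insert c (range s')) sequentially" by auto
  ultimately have "c \<in> f ` insert c (range s')"
    by (rule Lim_in_closed_set[OF _ _ trivial_limit_sequentially fs'])
  then obtain t where t: "t \<in> insert c (range s')" "c = f t" by (rule imageE)
  show ?thesis
  proof (cases "t = c")
    case True then show ?thesis using t by simp
  next
    case False
    then obtain k where "t = s' k" using t(1) by auto
    then have "f (s (k + M)) = c" using t(2) unfolding s'_def by simp
    then show ?thesis using le_add2 by blast
  qed
qed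

lemma ev_eq:
  fixes s :: "nat \<Rightarrow> 'a::t1_space"
  assumes "finite F" "\<And>k. s k \<in> F" "s \<longlonglongrightarrow> l"
  shows "eventually (\<lambda>k. s k = l) sequentially"
proof -
  have "closed (F - {l})" using assms(1) by (simp add: finite_imp_closed)
  then have "open (- (F - {l}))" by (rule open_Compl)
  moreover have "l \<in> - (F - {l})" by auto
  ultimately have "eventually (\<lambda>k. s k \<in> - (F - {l})) sequentially"
    using assms(3) topological_tendstoD by blast
  then show ?thesis by (rule eventually_mono) (use assms(2) in auto)
qed

lemma periodic:
  assumes "(f ^^ p) c = c"
  shows "(f ^^ n) c = (f ^^ (n mod p)) c"
proof -
  have m: "(f ^^ (p * q)) c = c" for q
  proof (induction q)
    case 0 then show ?case by simp
  next
    case (Suc q)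
    have "(f ^^ (p * Suc q)) c = (f ^^ p) ((f ^^ (p * q)) c)"
      by (simp add: funpow_add)
    then show ?case using Suc assms by simp
  qed
  have "(f ^^ n) c = (f ^^ (n mod p + p * (n div p))) c" by simp
  also have "\<dots> = (f ^^ (n mod p)) ((f ^^ (p * (n div p))) c)" by (simp only: funpow_add o_apply)
  also have "\<dots> = (f ^^ (n mod p)) c" using m by simp
  finally show ?thesis .
qed

lemma orbit_lemma:
  fixes f :: "'a::{monoid_mult, t2_space, first_countable_topology} \<Rightarrow> 'a"
    and A :: "nat \<Rightarrow> 'a set"
  assumes cpt: "compact (UNIV :: 'a set)"
    and mult_cont: "continuous_on UNIV (\<lambda>p :: 'a \<times> 'a. fst p * snd p)"
    and prox: "\<And>x y V. nhd_of V (1::'a) \<Longrightarrow>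
                 \<exists>z n. n \<ge> 1 \<and> (f ^^ n) x \<in> (\<lambda>v. z * v) ` V \<and> (f ^^ n) y \<in> (\<lambda>v. z * v) ` V"
    and Ao: "\<And>i. open (A i)" and A1: "\<And>i. 1 \<in> A i"
    and A: "\<And>S. open S \<Longrightarrow> 1 \<in> S \<Longrightarrow> eventually (\<lambda>i. A i \<subseteq> S) sequentially"
  shows "\<exists>e c. (\<forall>k. k \<le> e k) \<and> (\<lambda>k. (f ^^ e k) x) \<longlonglongrightarrow> c \<and> (\<lambda>k. (f ^^ Suc (e k)) x) \<longlonglongrightarrow> c"
proof -
  define Q where "Q m t \<longleftrightarrow> (case t of (z, n, v, w) \<Rightarrow> n \<ge> 1 \<and> v \<in> A m \<and> w \<in> A m \<and> (f ^^ n) ((f ^^ m) x) = z * v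
          \<and> (f ^^ n) ((f ^^ Suc m) x) = z * w)" for m and t :: "'a \<times> nat \<times> 'a \<times> 'a"
  have "\<forall>m. \<exists>t. Q m t"
  proof
    fix m
    have "nhd_of (A m) 1" unfolding nhd_of_def using Ao A1 by blast
    from prox[OF this, of "(f ^^ m) x" "(f ^^ Suc m) x"] obtain z n where
      "n \<ge> 1" "(f ^^ n) ((f ^^ m) x) \<in> (\<lambda>v. z * v) ` A m" "(f ^^ n) ((f ^^ Suc m) x) \<in> (\<lambda>v. z * v) ` A m"
      by blast
    then obtain v w where "v \<in> A m" "w \<in> A m" "(f ^^ n) ((f ^^ m) x) = z * v" "(f ^^ n) ((f ^^ Suc m) x) = z * w"
      by blast
    then have "Q m (z, n, v, w)" unfolding Q_def using \<open>n \<ge> 1\<close> by simp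
    then show "\<exists>t. Q m t" by blast
  qed
  then obtain g where g: "\<And>m. Q m (g m)" by (metis choice)
  define zz where "zz m = fst (g m)" for m
  define nn where "nn m = fst (snd (g m))" for m
  define vv where "vv m = fst (snd (snd (g m)))" for m
  define ww where "ww m = snd (snd (snd (g m)))" for m
  have P: "nn m \<ge> 1 \<and> vv m \<in> A m \<and> ww m \<in> A m \<and> (f ^^ nn m) ((f ^^ m) x) = zz m * vv m
          \<and> (f ^^ nn m) ((f ^^ Suc m) x) = zz m * ww m" for m
    using g[of m] unfolding Q_def zz_def nn_def vv_def ww_def by (auto split: prod.splits)
  have vA: "\<And>m. vv m \<in> A m" and wA: "\<And>m. ww m \<in> A m" using P by auto
  define e where "e m = nn m + m" for m
  have e1: "(f ^^ e m) x = zz m * vv m" for m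
    using P[of m] unfolding e_def by (simp add: funpow_add)
  have e2: "(f ^^ Suc (e m)) x = zz m * ww m" for m
  proof -
    have "Suc (e m) = nn m + Suc m" unfolding e_def by simp
    then have "(f ^^ Suc (e m)) x = (f ^^ (nn m + Suc m)) x" by (simp only:)
    also have "\<dots> = (f ^^ nn m) ((f ^^ Suc m) x)" by (simp only: funpow_add o_apply)
    finally have "(f ^^ Suc (e m)) x = (f ^^ nn m) ((f ^^ Suc m) x)" .
    then show ?thesis using P[of m] by simp
  qed
  obtain r c where r: "strict_mono r" and c1: "(\<lambda>k. zz (r k) * vv (r k)) \<longlonglongrightarrow> c"
    and c2: "(\<lambda>k. zz (r k) * ww (r k)) \<longlonglongrightarrow> c"
    using limit_lemma[OF cpt mult_cont A vA wA, of zz] by blast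
  have k: "\<forall>k. k \<le> e (r k)" using seq_suble[OF r] unfolding e_def by (meson le_add2 order_trans)
  have l1: "(\<lambda>k. (f ^^ e (r k)) x) \<longlonglongrightarrow> c" using c1 e1 by simp
  have l2: "(\<lambda>k. (f ^^ Suc (e (r k))) x) \<longlonglongrightarrow> c" using c2 e2 by simp
  show ?thesis by (rule exI[of _ "\<lambda>k. e (r k)"], rule exI[of _ c]) (use k l1 l2 in blast)
qed


theorem theorem15:
  fixes f :: "'a::{monoid_mult, t2_space, first_countable_topology} \<Rightarrow> 'a"
  assumes cpt: "compact (UNIV :: 'a set)"
    and mult_cont: "continuous_on UNIV (\<lambda>p :: 'a \<times> 'a. fst p * snd p)"
    and closed_f: "closed_map_on_type f"
    and prox: "\<And>x y V. nhd_of V (1::'a) \<Longrightarrow>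
                 \<exists>z n. n \<ge> 1 \<and> (f ^^ n) x \<in> (\<lambda>v. z * v) ` V \<and> (f ^^ n) y \<in> (\<lambda>v. z * v) ` V"
  shows "\<exists>!x. f x = x"
proof -
  obtain A :: "nat \<Rightarrow> 'a set" where Ao: "\<And>i. open (A i)" and A1: "\<And>i. 1 \<in> A i"
    and A: "\<And>S. open S \<Longrightarrow> 1 \<in> S \<Longrightarrow> eventually (\<lambda>i. A i \<subseteq> S) sequentially"
    by (rule countable_basis_at_decseq[of "1::'a"]) blast
  note orb = orbit_lemma[OF cpt mult_cont prox Ao A1 A]
  have ex: "\<exists>x. f x = x"
  proof (rule ccontr)
    assume nofix: "\<not> (\<exists>x. f x = x)"
    obtain e c where ek: "\<forall>k. k \<le> e k" and l1: "(\<lambda>k. (f ^^ e k) (1::'a)) \<longlonglongrightarrow> c"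
      and l2: "(\<lambda>k. (f ^^ Suc (e k)) (1::'a)) \<longlonglongrightarrow> c"
      using orb[of 1] by blast
    have l2': "(\<lambda>k. f ((f ^^ e k) 1)) \<longlonglongrightarrow> c" using l2 by simp
    have cs: "\<exists>k\<ge>M. f ((f ^^ e k) 1) = c" for M
      using clos_step[OF closed_f l1 l2', of M] nofix by blast
    obtain k0 where k0: "f ((f ^^ e k0) 1) = c" using cs[of 0] by blast
    obtain k1 where k1: "k1 \<ge> Suc (e k0)" "f ((f ^^ e k1) 1) = c" using cs[of "Suc (e k0)"] by blast
    have lt: "e k0 < e k1" using k1(1) ek[rule_format, of k1] by linarith
    define p where "p = e k1 - e k0"
    have pp: "p > 0" unfolding p_def using lt by simp
    have pe: "p + Suc (e k0) = Suc (e k1)" unfolding p_def using lt by simp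
    have "(f ^^ p) c = (f ^^ p) ((f ^^ Suc (e k0)) 1)" using k0 by simp
    also have "\<dots> = (f ^^ (p + Suc (e k0))) 1" by (simp only: funpow_add o_apply)
    also have "(f ^^ (p + Suc (e k0))) 1 = (f ^^ Suc (e k1)) 1" using pe by (simp only:)
    also have "(f ^^ Suc (e k1)) 1 = c" using k1 by simp
    finally have per: "(f ^^ p) c = c" .
    define F where "F = (\<lambda>i. (f ^^ i) c) ` {..<p}"
    have finF: "finite F" unfolding F_def by simp
    have inF: "(f ^^ n) c \<in> F" for n
    proof -
      have "n mod p \<in> {..<p}" using pp by simp
      then have "(f ^^ (n mod p)) c \<in> F" unfolding F_def by (rule imageI)
      then show ?thesis using periodic[OF per, of n] by simp
    qed
    obtain e' c' where l1': "(\<lambda>k. (f ^^ e' k) c) \<longlonglongrightarrow> c'"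
      and l2': "(\<lambda>k. (f ^^ Suc (e' k)) c) \<longlonglongrightarrow> c'"
      using orb[of c] by blast
    have "eventually (\<lambda>k. (f ^^ e' k) c = c') sequentially"
      by (rule ev_eq[OF finF inF l1'])
    moreover have "eventually (\<lambda>k. (f ^^ Suc (e' k)) c = c') sequentially"
      by (rule ev_eq[OF finF inF l2'])
    ultimately have "eventually (\<lambda>k. (f ^^ e' k) c = c' \<and> (f ^^ Suc (e' k)) c = c') sequentially"
      by (rule eventually_conj)
    then obtain N where "\<forall>n\<ge>N. (f ^^ e' n) c = c' \<and> (f ^^ Suc (e' n)) c = c'"
      unfolding eventually_sequentially by blast
    then have "(f ^^ e' N) c = c'" "(f ^^ Suc (e' N)) c = c'" by auto
    then have "f c' = c'" by simp
    then show False using nofix by blast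
  qed
  have un: "a = b" if fa: "f a = a" and fb: "f b = b" for a b
  proof -
    have fpa: "(f ^^ n) a = a" for n by (induction n) (use fa in auto)
    have fpb: "(f ^^ n) b = b" for n by (induction n) (use fb in auto)
    have "\<forall>m. \<exists>t. a = fst t * fst (snd t) \<and> b = fst t * snd (snd t) \<and> fst (snd t) \<in> A m \<and> snd (snd t) \<in> A m"
    proof
      fix m
      have "nhd_of (A m) 1" unfolding nhd_of_def using Ao A1 by blast
      from prox[OF this, of a b] obtain z n where
        "(f ^^ n) a \<in> (\<lambda>v. z * v) ` A m" "(f ^^ n) b \<in> (\<lambda>v. z * v) ` A m" by blast
      then have "a \<in> (\<lambda>v. z * v) ` A m" "b \<in> (\<lambda>v. z * v) ` A m" using fpa fpb by simp_all
      then obtain v w where "v \<in> A m" "w \<in> A m" "a = z * v" "b = z * w"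
        by blast
      then show "\<exists>t. a = fst t * fst (snd t) \<and> b = fst t * snd (snd t) \<and> fst (snd t) \<in> A m \<and> snd (snd t) \<in> A m"
        by (intro exI[of _ "(z, v, w)"]) simp
    qed
    then obtain g where g: "\<And>m. a = fst (g m) * fst (snd (g m)) \<and> b = fst (g m) * snd (snd (g m))
        \<and> fst (snd (g m)) \<in> A m \<and> snd (snd (g m)) \<in> A m" by (metis choice)
    have vA: "\<And>m. fst (snd (g m)) \<in> A m" and wA: "\<And>m. snd (snd (g m)) \<in> A m" using g by auto
    obtain r c where "(\<lambda>k. fst (g (r k)) * fst (snd (g (r k)))) \<longlonglongrightarrow> c"
      "(\<lambda>k. fst (g (r k)) * snd (snd (g (r k)))) \<longlonglongrightarrow> c"
      using limit_lemma[OF cpt mult_cont A vA wA, of "\<lambda>m. fst (g m)"] by blast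
    moreover have ga: "fst (g m) * fst (snd (g m)) = a" for m using g[of m] by simp
    moreover have gb: "fst (g m) * snd (snd (g m)) = b" for m using g[of m] by simp
    ultimately have "(\<lambda>k. a) \<longlonglongrightarrow> c" "(\<lambda>k. b) \<longlonglongrightarrow> c" by simp_all
    then show "a = b" using LIMSEQ_unique by blast
  qed
  show ?thesis using ex un by blast
qed

end
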